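(* Let $p$ be a prime and $V$ a vector space of dimension $d$ over $\mathbb{F}_p$. Let $G_0\le \mathrm{GL}(V)$ be a solvable group acting irreducibly and quasi-primitively on $V$, with structure data $W$, $e$ as described in the context. Let $\mathrm{rad}(e)$ denote the product of the distinct prime divisors of $e$. Then $\mathrm{rad}(e)$ divides $|W|-1$.
   Context: $G_0$ is quasi-primitive on $V$: every normal subgroup of $G_0$ acts homogeneously on $V$. Structure data: subgroups $Z(E)\le U\le F\le A\le G_0$, each normal in $G_0$, and a characteristic subgroup $E$ of $F$, such that: (i) $F=EU$ is a central product with $E\cap U=Z(E)$; (ii) $F/U\cong E/Z(E)$ and $E/Z(E)$ is a direct sum of completely reducible $G_0/F$-modules; (iii) $E=E_1\times\cdots\times E_s$ with $E_i$ an extraspecial $q_i$-group of order $q_i^{2m_i+1}$, the $q_i$ distinct primes and $m_i\ge 1$; $e:=\prod_i q_i^{m_i}$, $e\mid d$, $\gcd(p,e)=1$; (iv) $A=C_{G_0}(U)$ and $A/F$ acts faithfully on $E/Z(E)$; (v) $U$ is cyclic and acts fixed-point-freely on $W$, an irreducible $\mathbb{F}_pU$-submodule of $V$; (vi) $|U|$ divides $p^k-1$ for some $k\ge1$ and $W$ is identified with the $\mathbb{F}_p$-span of $U$, isomorphic to $\mathbb{F}_{p^k}$, so $|W|=p^k$; (vii) $|V|=|W|^{eb}$ for some positive integer $b$. *)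

theory Defs
  imports "HOL-Algebra.Algebra"
begin

text \<open>The vector space V over F_p is modelled as the finite elementary abelian
p-group given by the type 'v (an F_p-vector space is exactly such a group, and
F_p-linear maps are exactly the additive maps).\<close>

definition elem_ab :: "nat \<Rightarrow> 'v::ab_group_add itself \<Rightarrow> bool" where
  "elem_ab p _ \<longleftrightarrow> (\<forall>x::'v. (\<Sum>_\<in>{..<p}. x) = 0)"

definition GLV :: "('v::ab_group_add \<Rightarrow> 'v) monoid" where
  "GLV = \<lparr>carrier = {f. bij f \<and> (\<forall>x y. f (x + y) = f x + f y)}, monoid.mult = (\<circ>), one = id\<rparr>"

abbreviation grp :: "('v::ab_group_add \<Rightarrow> 'v) set \<Rightarrow> ('v \<Rightarrow> 'v) monoid" where
  "grp S \<equiv> GLV\<lparr>carrier := S\<rparr>"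

definition center :: "('a, 'b) monoid_scheme \<Rightarrow> 'a set" where
  "center H = {x \<in> carrier H. \<forall>y\<in>carrier H. x \<otimes>\<^bsub>H\<^esub> y = y \<otimes>\<^bsub>H\<^esub> x}"

definition maximal_subgroup :: "('a, 'b) monoid_scheme \<Rightarrow> 'a set \<Rightarrow> bool" where
  "maximal_subgroup H M \<longleftrightarrow> subgroup M H \<and> M \<noteq> carrier H \<and>
     (\<forall>K. subgroup K H \<and> M \<subseteq> K \<longrightarrow> K = M \<or> K = carrier H)"

definition frattini :: "('a, 'b) monoid_scheme \<Rightarrow> 'a set" where
  "frattini H = {x \<in> carrier H. \<forall>M. maximal_subgroup H M \<longrightarrow> x \<in> M}"

definition extraspecial :: "nat \<Rightarrow> nat \<Rightarrow> ('a, 'b) monoid_scheme \<Rightarrow> bool" where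
  "extraspecial q m H \<longleftrightarrow> group H \<and> finite (carrier H) \<and>
     card (carrier H) = q ^ (2 * m + 1) \<and> card (center H) = q \<and>
     derived H (carrier H) = center H \<and> frattini H = center H"

definition characteristic :: "('a, 'b) monoid_scheme \<Rightarrow> 'a set \<Rightarrow> bool" where
  "characteristic H K \<longleftrightarrow> subgroup K H \<and> (\<forall>\<phi>\<in>iso H H. \<phi> ` K = K)"

definition cyclic_sg :: "('a, 'b) monoid_scheme \<Rightarrow> 'a set \<Rightarrow> bool" where
  "cyclic_sg G U \<longleftrightarrow> (\<exists>g\<in>U. U = generate G {g})"

text \<open>Modules: F_p-subspaces of V are the additive subgroups.\<close>
definition addsub :: "'v::ab_group_add set \<Rightarrow> bool" where
  "addsub W \<longleftrightarrow> 0 \<in> W \<and> (\<forall>x\<in>W. \<forall>y\<in>W. x + y \<in> W) \<and> (\<forall>x\<in>W. - x \<in> W)"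

definition addspan :: "'v::ab_group_add set \<Rightarrow> 'v set" where
  "addspan Y = {x. \<forall>W. addsub W \<and> Y \<subseteq> W \<longrightarrow> x \<in> W}"

definition submod :: "('v::ab_group_add \<Rightarrow> 'v) set \<Rightarrow> 'v set \<Rightarrow> bool" where
  "submod N W \<longleftrightarrow> addsub W \<and> (\<forall>g\<in>N. g ` W \<subseteq> W)"

definition irred_mod :: "('v::ab_group_add \<Rightarrow> 'v) set \<Rightarrow> 'v set \<Rightarrow> bool" where
  "irred_mod N W \<longleftrightarrow> submod N W \<and> W \<noteq> {0} \<and>
     (\<forall>W'. submod N W' \<and> W' \<subseteq> W \<longrightarrow> W' = {0} \<or> W' = W)"

definition iso_mod :: "('v::ab_group_add \<Rightarrow> 'v) set \<Rightarrow> 'v set \<Rightarrow> 'v set \<Rightarrow> bool" where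
  "iso_mod N W1 W2 \<longleftrightarrow> (\<exists>\<phi>. bij_betw \<phi> W1 W2 \<and>
     (\<forall>x\<in>W1. \<forall>y\<in>W1. \<phi> (x + y) = \<phi> x + \<phi> y) \<and>
     (\<forall>g\<in>N. \<forall>x\<in>W1. \<phi> (g x) = g (\<phi> x)))"

definition homogeneous :: "('v::ab_group_add \<Rightarrow> 'v) set \<Rightarrow> bool" where
  "homogeneous N \<longleftrightarrow> (\<exists>S. (\<forall>W\<in>S. irred_mod N W) \<and>
     (\<forall>W1\<in>S. \<forall>W2\<in>S. iso_mod N W1 W2) \<and> addspan (\<Union>S) = UNIV)"

definition irreducible_on_V :: "('v::ab_group_add \<Rightarrow> 'v) set \<Rightarrow> bool" where
  "irreducible_on_V G0 \<longleftrightarrow> irred_mod G0 UNIV"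

definition quasi_primitive :: "('v::ab_group_add \<Rightarrow> 'v) set \<Rightarrow> bool" where
  "quasi_primitive G0 \<longleftrightarrow> (\<forall>N. N \<lhd> grp G0 \<longrightarrow> homogeneous N)"

text \<open>E/Z is a completely reducible module for G0 acting by conjugation:
every G0-invariant subgroup M with Z \<le> M \<le> E has a G0-invariant complement
modulo Z.\<close>
definition conj_inv :: "('v::ab_group_add \<Rightarrow> 'v) set \<Rightarrow> ('v \<Rightarrow> 'v) set \<Rightarrow> bool" where
  "conj_inv G0 M \<longleftrightarrow> (\<forall>g\<in>G0. \<forall>x\<in>M. g \<otimes>\<^bsub>GLV\<^esub> x \<otimes>\<^bsub>GLV\<^esub> inv\<^bsub>GLV\<^esub> g \<in> M)"

definition compl_red_quot ::
  "('v::ab_group_add \<Rightarrow> 'v) set \<Rightarrow> ('v \<Rightarrow> 'v) set \<Rightarrow> ('v \<Rightarrow> 'v) set \<Rightarrow> bool" where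
  "compl_red_quot G0 E Z \<longleftrightarrow> (\<forall>M. subgroup M (grp E) \<and> Z \<subseteq> M \<and> conj_inv G0 M \<longrightarrow>
     (\<exists>M'. subgroup M' (grp E) \<and> Z \<subseteq> M' \<and> conj_inv G0 M' \<and>
        M \<inter> M' = Z \<and> M <#>\<^bsub>GLV\<^esub> M' = E))"

definition rad :: "nat \<Rightarrow> nat" where
  "rad n = (\<Prod>q\<in>prime_factors n. q)"

end

theory Submission
  imports Defs
begin

lemma group_GLV: "group (GLV :: ('v::ab_group_add \<Rightarrow> 'v) monoid)"
proof (rule groupI)
  fix x y assume "x \<in> carrier (GLV::('v \<Rightarrow> 'v) monoid)" "y \<in> carrier (GLV::('v \<Rightarrow> 'v) monoid)"
  then show "x \<otimes>\<^bsub>GLV\<^esub> y \<in> carrier (GLV::('v \<Rightarrow> 'v) monoid)"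
    by (auto simp: GLV_def bij_comp)
next
  show "\<one>\<^bsub>GLV\<^esub> \<in> carrier (GLV::('v \<Rightarrow> 'v) monoid)" by (simp add: GLV_def)
next
  fix x y z :: "'v \<Rightarrow> 'v"
  show "x \<otimes>\<^bsub>GLV\<^esub> y \<otimes>\<^bsub>GLV\<^esub> z = x \<otimes>\<^bsub>GLV\<^esub> (y \<otimes>\<^bsub>GLV\<^esub> z)"
    by (simp add: GLV_def o_assoc)
next
  fix x :: "'v \<Rightarrow> 'v"
  show "\<one>\<^bsub>GLV\<^esub> \<otimes>\<^bsub>GLV\<^esub> x = x" by (simp add: GLV_def)
next
  fix f :: "'v \<Rightarrow> 'v" assume f: "f \<in> carrier (GLV::('v \<Rightarrow> 'v) monoid)"
  then have bf: "bij f" and af: "\<And>x y. f (x + y) = f x + f y" by (auto simp: GLV_def)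
  have bi: "bij (Hilbert_Choice.inv f)" using bf by (simp add: bij_imp_bij_inv)
  have ai: "Hilbert_Choice.inv f (x + y) = Hilbert_Choice.inv f x + Hilbert_Choice.inv f y" for x y
  proof -
    have "f (Hilbert_Choice.inv f x + Hilbert_Choice.inv f y) = x + y" using af bf by (simp add: bij_is_surj surj_f_inv_f)
    then show ?thesis using bf by (metis bij_inv_eq_iff)
  qed
  have "Hilbert_Choice.inv f \<circ> f = id" using bf by (simp add: bij_is_inj)
  then show "\<exists>y\<in>carrier GLV. y \<otimes>\<^bsub>GLV\<^esub> f = \<one>\<^bsub>GLV\<^esub>"
    using bi ai by (intro bexI[of _ "Hilbert_Choice.inv f"]) (auto simp: GLV_def)
qed

lemma (in group) inv_commute_aux:
  assumes "x \<in> carrier G" "y \<in> carrier G" "x \<otimes> y = y \<otimes> x"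
  shows "inv x \<otimes> y = y \<otimes> inv x"
proof -
  have "inv x \<otimes> y = inv x \<otimes> (y \<otimes> x) \<otimes> inv x" using assms by (simp add: m_assoc)
  also have "\<dots> = inv x \<otimes> (x \<otimes> y) \<otimes> inv x" using assms by simp
  also have "\<dots> = (inv x \<otimes> x) \<otimes> y \<otimes> inv x" using assms by (simp only: m_assoc inv_closed m_closed)
  also have "\<dots> = y \<otimes> inv x" using assms by simp
  finally show ?thesis .
qed

lemma prod_primes_dvd:
  fixes P :: "nat set"
  assumes "finite P" "\<forall>x\<in>P. Factorial_Ring.prime x" "\<forall>x\<in>P. x dvd n"
  shows "\<Prod>P dvd n"
  using assms
proof (induction P rule: finite_induct)
  case empty then show ?case by simp
next
  case (insert x P)
  have "\<not> x dvd \<Prod>P"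
  proof
    assume "x dvd \<Prod>P"
    then obtain y where "y \<in> P" "x dvd y" using prime_dvd_prod_iff[of P x "\<lambda>y. y"] insert by auto
    then have "x = y" using insert primes_dvd_imp_eq by blast
    then show False using insert \<open>y \<in> P\<close> by blast
  qed
  then have "coprime x (\<Prod>P)" using insert prime_imp_coprime by blast
  then show ?case using insert by (simp add: divides_mult)
qed

theorem lemma2p6:
  fixes p d :: nat
    and G0 A F U E :: "('v::{ab_group_add, finite} \<Rightarrow> 'v) set"
    and s :: nat and Es :: "nat \<Rightarrow> ('v \<Rightarrow> 'v) set" and q m :: "nat \<Rightarrow> nat"
    and e k b :: nat and W :: "'v set"
  assumes prime_p: "Factorial_Ring.prime p"
    and V_elem: "elem_ab p TYPE('v)"
    and V_dim: "card (UNIV :: 'v set) = p ^ d"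
    and G0_sub: "subgroup G0 GLV"
    and G0_solv: "solvable (grp G0)"
    and G0_irr: "irreducible_on_V G0"
    and G0_qp: "quasi_primitive G0"
    \<comment> \<open>structure data\<close>
    and ZU: "center (grp E) \<subseteq> U" and UF: "U \<subseteq> F" and FA: "F \<subseteq> A" and AG: "A \<subseteq> G0"
    and U_nml: "U \<lhd> grp G0" and F_nml: "F \<lhd> grp G0" and A_nml: "A \<lhd> grp G0"
    and Z_nml: "center (grp E) \<lhd> grp G0"
    and E_char: "characteristic (grp F) E"
    \<comment> \<open>(i) central product\<close>
    and i_prod: "F = E <#>\<^bsub>GLV\<^esub> U"
    and i_comm: "\<forall>x\<in>E. \<forall>u\<in>U. x \<otimes>\<^bsub>GLV\<^esub> u = u \<otimes>\<^bsub>GLV\<^esub> x"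
    and i_int: "E \<inter> U = center (grp E)"
    \<comment> \<open>(ii)\<close>
    and ii_iso: "(grp F Mod U) \<cong> (grp E Mod center (grp E))"
    and ii_cr: "compl_red_quot G0 E (center (grp E))"
    \<comment> \<open>(iii)\<close>
    and iii_sub: "\<forall>i<s. subgroup (Es i) (grp E)"
    and iii_comm: "\<forall>i<s. \<forall>j<s. i \<noteq> j \<longrightarrow>
         (\<forall>x\<in>Es i. \<forall>y\<in>Es j. x \<otimes>\<^bsub>GLV\<^esub> y = y \<otimes>\<^bsub>GLV\<^esub> x)"
    and iii_gen: "E = generate GLV (\<Union>i<s. Es i)"
    and iii_indep: "\<forall>i<s. Es i \<inter> generate GLV (\<Union>j\<in>{..<s} - {i}. Es j) = {\<one>\<^bsub>GLV\<^esub>}"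
    and iii_es: "\<forall>i<s. extraspecial (q i) (m i) (grp (Es i))"
    and iii_q: "\<forall>i<s. Factorial_Ring.prime (q i)" and iii_qd: "inj_on q {..<s}"
    and iii_m: "\<forall>i<s. m i \<ge> 1"
    and iii_e: "e = (\<Prod>i<s. q i ^ m i)" and e_dvd: "e dvd d" and e_cop: "coprime p e"
    \<comment> \<open>(iv)\<close>
    and iv_A: "A = {g \<in> G0. \<forall>u\<in>U. g \<otimes>\<^bsub>GLV\<^esub> u = u \<otimes>\<^bsub>GLV\<^esub> g}"
    and iv_faith: "{a \<in> A. \<forall>x\<in>E. a \<otimes>\<^bsub>GLV\<^esub> x \<otimes>\<^bsub>GLV\<^esub> inv\<^bsub>GLV\<^esub> a
                        \<otimes>\<^bsub>GLV\<^esub> inv\<^bsub>GLV\<^esub> x \<in> center (grp E)} = F"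
    \<comment> \<open>(v)\<close>
    and v_cyc: "cyclic_sg GLV U"
    and v_W: "irred_mod U W"
    and v_fpf: "\<forall>u\<in>U. u \<noteq> \<one>\<^bsub>GLV\<^esub> \<longrightarrow> (\<forall>w\<in>W. u w = w \<longrightarrow> w = 0)"
    \<comment> \<open>(vi)\<close>
    and vi_k: "k \<ge> 1" and vi_U: "card U dvd p ^ k - 1" and vi_W: "card W = p ^ k"
    \<comment> \<open>(vii)\<close>
    and vii: "b > 0" "card (UNIV :: 'v set) = card W ^ (e * b)"
  shows "rad e dvd card W - 1"
proof -
  interpret G: group "GLV :: ('v \<Rightarrow> 'v) monoid" by (rule group_GLV)
  have G0c: "G0 \<subseteq> carrier GLV" using G0_sub subgroup.subset by blast
  have F_G0: "subgroup F (grp G0)" using F_nml normal_imp_subgroup by blast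
  have U_G0: "subgroup U (grp G0)" using U_nml normal_imp_subgroup by blast
  have F_sub: "subgroup F GLV" using G.incl_subgroup[OF G0_sub F_G0] .
  have U_sub: "subgroup U GLV" using G.incl_subgroup[OF G0_sub U_G0] .
  have E_F: "subgroup E (grp F)" using E_char by (simp add: characteristic_def)
  have E_sub: "subgroup E GLV" using G.incl_subgroup[OF F_sub E_F] .
  have Es_sub: "subgroup (Es i) GLV" if "i < s" for i
    using G.incl_subgroup[OF E_sub] iii_sub that by blast
  have UG: "group (grp U)" using U_sub G.subgroup_imp_group by blast
  have Es_E: "Es i \<subseteq> E" if "i < s" for i
    using iii_sub that subgroup.subset by fastforce
  have key: "q i dvd card W - 1" if i: "i < s" for i
  proof -
    define Z where "Z = center (grp (Es i))"
    have Zdef: "Z = {x \<in> Es i. \<forall>y\<in>Es i. x \<otimes>\<^bsub>GLV\<^esub> y = y \<otimes>\<^bsub>GLV\<^esub> x}"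
      by (simp add: Z_def center_def)
    have Esc: "Es i \<subseteq> carrier GLV" using Es_sub[OF i] subgroup.subset by blast
    have Z_sub: "subgroup Z GLV"
    proof (rule G.subgroupI)
      show "Z \<subseteq> carrier GLV" using Esc Zdef by auto
      show "Z \<noteq> {}" using Zdef subgroup.one_closed[OF Es_sub[OF i]] Esc by (auto intro!: exI[of _ "\<one>\<^bsub>GLV\<^esub>"])
      fix a assume a: "a \<in> Z"
      then have aE: "a \<in> Es i" and ac: "\<forall>y\<in>Es i. a \<otimes>\<^bsub>GLV\<^esub> y = y \<otimes>\<^bsub>GLV\<^esub> a" using Zdef by auto
      show "inv\<^bsub>GLV\<^esub> a \<in> Z" unfolding Zdef
      proof (intro CollectI conjI ballI)
        show "inv\<^bsub>GLV\<^esub> a \<in> Es i" using subgroup.m_inv_closed[OF Es_sub[OF i] aE] .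
        fix y assume y: "y \<in> Es i"
        then show "inv\<^bsub>GLV\<^esub> a \<otimes>\<^bsub>GLV\<^esub> y = y \<otimes>\<^bsub>GLV\<^esub> inv\<^bsub>GLV\<^esub> a"
          using ac aE Esc G.inv_commute_aux[of a y] by auto
      qed
      fix b assume b: "b \<in> Z"
      then have bE: "b \<in> Es i" and bc: "\<forall>y\<in>Es i. b \<otimes>\<^bsub>GLV\<^esub> y = y \<otimes>\<^bsub>GLV\<^esub> b" using Zdef by auto
      show "a \<otimes>\<^bsub>GLV\<^esub> b \<in> Z" unfolding Zdef
      proof (intro CollectI conjI ballI)
        show "a \<otimes>\<^bsub>GLV\<^esub> b \<in> Es i" using subgroup.m_closed[OF Es_sub[OF i] aE bE] .
        fix y assume y: "y \<in> Es i"
        then show "a \<otimes>\<^bsub>GLV\<^esub> b \<otimes>\<^bsub>GLV\<^esub> y = y \<otimes>\<^bsub>GLV\<^esub> (a \<otimes>\<^bsub>GLV\<^esub> b)"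
        proof -
          have aG: "a \<in> carrier GLV" and bG: "b \<in> carrier GLV" and yG: "y \<in> carrier GLV"
            using aE bE y Esc by auto
          have "a \<otimes>\<^bsub>GLV\<^esub> b \<otimes>\<^bsub>GLV\<^esub> y = a \<otimes>\<^bsub>GLV\<^esub> (b \<otimes>\<^bsub>GLV\<^esub> y)" using aG bG yG by (simp add: G.m_assoc)
          also have "\<dots> = a \<otimes>\<^bsub>GLV\<^esub> (y \<otimes>\<^bsub>GLV\<^esub> b)" using bc y by simp
          also have "\<dots> = (a \<otimes>\<^bsub>GLV\<^esub> y) \<otimes>\<^bsub>GLV\<^esub> b" using aG bG yG by (simp add: G.m_assoc)
          also have "\<dots> = (y \<otimes>\<^bsub>GLV\<^esub> a) \<otimes>\<^bsub>GLV\<^esub> b" using ac y by simp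
          also have "\<dots> = y \<otimes>\<^bsub>GLV\<^esub> (a \<otimes>\<^bsub>GLV\<^esub> b)" using aG bG yG by (simp add: G.m_assoc)
          finally show ?thesis .
        qed
      qed
    qed
    have ZU': "Z \<subseteq> U"
    proof
      fix x assume x: "x \<in> Z"
      then have xE: "x \<in> Es i" and xc: "\<forall>y\<in>Es i. x \<otimes>\<^bsub>GLV\<^esub> y = y \<otimes>\<^bsub>GLV\<^esub> x" using Zdef by auto
      have xG: "x \<in> carrier GLV" using xE Esc by auto
      define C where "C = {y \<in> carrier GLV. x \<otimes>\<^bsub>GLV\<^esub> y = y \<otimes>\<^bsub>GLV\<^esub> x}"
      have C_sub: "subgroup C GLV"
      proof (rule G.subgroupI)
        show "C \<subseteq> carrier GLV" by (auto simp: C_def)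
        show "C \<noteq> {}" using xG by (auto simp: C_def intro!: exI[of _ "\<one>\<^bsub>GLV\<^esub>"])
        fix a assume "a \<in> C"
        then show "inv\<^bsub>GLV\<^esub> a \<in> C" using xG unfolding C_def
          using G.inv_commute_aux[of a x] by auto
        fix b assume "b \<in> C"
        show "a \<otimes>\<^bsub>GLV\<^esub> b \<in> C"
        proof -
          have aG: "a \<in> carrier GLV" and bG: "b \<in> carrier GLV" and ac: "x \<otimes>\<^bsub>GLV\<^esub> a = a \<otimes>\<^bsub>GLV\<^esub> x"
            and bc: "x \<otimes>\<^bsub>GLV\<^esub> b = b \<otimes>\<^bsub>GLV\<^esub> x"
            using \<open>a \<in> C\<close> \<open>b \<in> C\<close> by (auto simp: C_def)
          have "x \<otimes>\<^bsub>GLV\<^esub> (a \<otimes>\<^bsub>GLV\<^esub> b) = (x \<otimes>\<^bsub>GLV\<^esub> a) \<otimes>\<^bsub>GLV\<^esub> b" using aG bG xG by (simp add: G.m_assoc)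
          also have "\<dots> = a \<otimes>\<^bsub>GLV\<^esub> (x \<otimes>\<^bsub>GLV\<^esub> b)" using ac aG bG xG by (simp add: G.m_assoc)
          also have "\<dots> = (a \<otimes>\<^bsub>GLV\<^esub> b) \<otimes>\<^bsub>GLV\<^esub> x" using bc aG bG xG by (simp add: G.m_assoc)
          finally show ?thesis using aG bG by (simp add: C_def)
        qed
      qed
      have "(\<Union>j<s. Es j) \<subseteq> C"
      proof
        fix y assume "y \<in> (\<Union>j<s. Es j)"
        then obtain j where j: "j < s" "y \<in> Es j" by auto
        have yG: "y \<in> carrier GLV" using j Es_sub subgroup.subset by blast
        show "y \<in> C"
        proof (cases "j = i")
          case True then show ?thesis using xc j yG by (auto simp: C_def)
        next
          case False then show ?thesis using iii_comm i j xE yG by (auto simp: C_def)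
        qed
      qed
      then have "E \<subseteq> C" using iii_gen G.generate_subgroup_incl[OF _ C_sub] by blast
      then have "x \<in> center (grp E)" using xE Es_E[OF i] by (auto simp: center_def C_def)
      then show "x \<in> U" using ZU by blast
    qed
    have "subgroup Z (grp U)" using G.subgroup_incl[OF Z_sub U_sub ZU'] .
    then have "card (rcosets\<^bsub>grp U\<^esub> Z) * card Z = order (grp U)"
      using group.lagrange[OF UG] by blast
    then have "card (rcosets\<^bsub>grp U\<^esub> Z) * card Z = card U" by (simp add: order_def)
    then have "card Z dvd card U" by (metis dvd_triv_right)
    moreover have "card Z = q i" using iii_es i by (simp add: extraspecial_def Z_def)
    ultimately show ?thesis using vi_U vi_W by (metis dvd_trans)
  qed
  have "\<forall>x\<in>prime_factors e. x dvd card W - 1"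
  proof
    fix x assume x: "x \<in> prime_factors e"
    then have xp: "Factorial_Ring.prime x" and xd: "x dvd (\<Prod>i<s. q i ^ m i)" using iii_e by auto
    then obtain i where i: "i < s" "x dvd q i ^ m i" using prime_dvd_prod_iff[of "{..<s}" x] xp by auto
    then have "x dvd q i" using xp prime_dvd_power by blast
    then have "x = q i" using xp iii_q i primes_dvd_imp_eq by blast
    then show "x dvd card W - 1" using key i by simp
  qed
  then show ?thesis unfolding rad_def using prod_primes_dvd[of "prime_factors e"] by auto
qed

end
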